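(* Assume the standing assumptions below and let $f$ satisfy the conditions (F). Let $g$ be defined by $$g(t,x)=A c_0(x)\Big[\varphi(c_0(x))\,e^{\lambda A\int_0^t f(\tau,x)d\tau}-Bc_0(x)\Big]^{-1},\qquad (t,x)\in[0,T]\times\Omega_{h,0}^+.$$ Then there are constants $k_1,\kappa,\hat C_1,\hat C_2>0$, depending only on $A,B,C_0,c_m,\lambda,T,\eta$ (and not on $h$, nor on $f$ beyond (F)), such that $$\sup_{t\in[0,T]}\|C_0-g(t,\cdot)\|^2_{L^2(\Omega_h^+)}\le k_1\Big(\|C_0-c_0\|^2_{L^2(\Omega_h^+)}+\kappa\sup_{t\in[0,T]}\|f(t,\cdot)\|^2_{L^2(\Omega_h^+)}\Big),$$ $$\|g\|_{L^\infty([0,T]\times\Omega_h^+)}\le\hat C_1,\qquad \sup_{t\in[0,T]}\|D^+_hg(t,\cdot)\|^2_{L^2(\Omega_h^+)}\le\hat C_2\,T\Big(\|D^+_hc_0\|^2_{L^2(\Omega_h^+)}+\kappa\int_0^T\|D^+_hf(t,\cdot)\|^2_{L^2(\Omega_h^+)}dt\Big).$$ Moreover the last estimate also holds for $\varphi(g)$ in place of $g$, up to the factor $|B|$.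
   Context: Discrete setting: $h>0$, $\Omega_h^+=\{h,2h,\dots\}$, $\Omega_{h,0}^+=\Omega_h^+\cup\{0\}$, $\|f\|_{L^p(\Omega_h^+)}=(h\sum_{z\in\Omega_h^+}|f(z)|^p)^{1/p}$, $D^+_hf(x)=\frac{f(x+h)-f(x)}{h}$, $D^-_hf(x)=\frac{f(x)-f(x-h)}{h}$. Standing assumptions: $A=1$, $B\in\{-1,1\}$, $\varphi(c)=A+Bc$, $\lambda>0$, $T>0$, $\eta>0$; $\psi\in C^\beta([0,T])$ for some $\beta\in(1/4,1/2)$ with $0\le\psi\le\eta$, $\psi(0)=0$; $s_0:\Omega_{h,0}^+\to\mathbb{R}$ with $0\le s_0\le\eta$, $s_0(0)=0$, $s_0,D^+_hs_0\in L^2(\Omega_h^+)$; $c_0:\Omega_{h,0}^+\to\mathbb{R}$ with $0<c_m\le c_0\le C_0$ and $C_0-c_0,\ D^+_hc_0\in L^2(\Omega_h^+)$; there are constants $0<\varphi_{\min}\le\varphi_{\max}$ with $\varphi_{\min}\le\varphi(c)\le\varphi_{\max}$ for all $c\in[0,C_0]$; if $B=1$ then $\eta<1$. Conditions (F) on a Borel $f:[0,T]\times\Omega_{h,0}^+\to\mathbb{R}$, for some $K>0$: $f\in C([0,T],L^2(\Omega_h^+))$, $D^+_hf\in L^2([0,T],L^2(\Omega_h^+))$, $\sup_t\|f(t)\|^2_{L^2(\Omega_h^+)}+\int_0^T\|D^+_hf(t)\|^2_{L^2(\Omega_h^+)}dt\le K$, $f\ge0$, $f(t,0)=\psi(t)$,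 and $0\le f\le\eta$. *)

theory Defs
  imports "HOL-Analysis.Analysis"
begin

text \<open>Grid functions on \<Omega>_{h,0}^+ = {0,h,2h,...} are represented as functions
  nat \<Rightarrow> real, index k standing for the grid point k*h. Index 0 is the
  boundary point 0; \<Omega>_h^+ corresponds to indices k \<ge> 1.\<close>

definition Acoef :: real where "Acoef = 1"

definition phi :: "real \<Rightarrow> real \<Rightarrow> real" where
  "phi B c = Acoef + B * c"

definition l2sq :: "real \<Rightarrow> (nat \<Rightarrow> real) \<Rightarrow> real" where
  "l2sq h u = h * (\<Sum>n. (u (Suc n))\<^sup>2)"

definition inL2 :: "(nat \<Rightarrow> real) \<Rightarrow> bool" where
  "inL2 u \<longleftrightarrow> summable (\<lambda>n. (u (Suc n))\<^sup>2)"

definition Dp :: "real \<Rightarrow> (nat \<Rightarrow> real) \<Rightarrow> nat \<Rightarrow> real" where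
  "Dp h u k = (u (Suc k) - u k) / h"

definition holder_on :: "real \<Rightarrow> real set \<Rightarrow> (real \<Rightarrow> real) \<Rightarrow> bool" where
  "holder_on \<beta> S \<psi> \<longleftrightarrow> (\<exists>L. \<forall>s\<in>S. \<forall>t\<in>S. \<bar>\<psi> s - \<psi> t\<bar> \<le> L * \<bar>s - t\<bar> powr \<beta>)"

definition condF :: "real \<Rightarrow> real \<Rightarrow> real \<Rightarrow> (real \<Rightarrow> real) \<Rightarrow> real \<Rightarrow> (real \<Rightarrow> nat \<Rightarrow> real) \<Rightarrow> bool" where
  "condF h T \<eta> \<psi> K f \<longleftrightarrow>
     K > 0 \<and>
     \<comment> \<open>Borel measurability (the space factor is discrete)\<close>
     (\<forall>k. (\<lambda>t. f t k) \<in> borel_measurable (restrict_space borel {0..T})) \<and>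
     \<comment> \<open>f \<in> C([0,T], L2)\<close>
     (\<forall>t\<in>{0..T}. inL2 (f t)) \<and>
     (\<forall>t\<in>{0..T}. \<forall>\<epsilon>>0. \<exists>\<delta>>0. \<forall>s\<in>{0..T}. \<bar>s - t\<bar> < \<delta> \<longrightarrow>
         l2sq h (\<lambda>k. f s k - f t k) < \<epsilon>) \<and>
     \<comment> \<open>D_h^+ f \<in> L2([0,T], L2)\<close>
     (\<forall>t\<in>{0..T}. inL2 (Dp h (f t))) \<and>
     set_integrable lborel {0..T} (\<lambda>t. l2sq h (Dp h (f t))) \<and>
     \<comment> \<open>energy bound: sup_t ||f(t)||^2 + int_0^T ||D^+ f||^2 \<le> K\<close>
     (\<forall>t\<in>{0..T}. l2sq h (f t) + (LINT t:{0..T}|lborel. l2sq h (Dp h (f t))) \<le> K) \<and>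
     \<comment> \<open>sign, boundary condition, bounds\<close>
     (\<forall>t\<in>{0..T}. f t 0 = \<psi> t) \<and>
     (\<forall>t\<in>{0..T}. \<forall>k. 0 \<le> f t k \<and> f t k \<le> \<eta>)"

definition gfun :: "real \<Rightarrow> real \<Rightarrow> (nat \<Rightarrow> real) \<Rightarrow> (real \<Rightarrow> nat \<Rightarrow> real) \<Rightarrow> real \<Rightarrow> nat \<Rightarrow> real" where
  "gfun B lam c0 f t k =
     Acoef * c0 k / (phi B (c0 k) * exp (lam * Acoef * integral {0..t} (\<lambda>\<tau>. f \<tau> k)) - B * c0 k)"

end

theory Submission
  imports Defs
begin

lemma exp_lip:
  fixes a b M :: real
  assumes "0 \<le> a" "a \<le> M" "0 \<le> b" "b \<le> M"
  shows "\<bar>exp a - exp b\<bar> \<le> exp M * \<bar>a - b\<bar>"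
proof -
  have key: "exp y - exp x \<le> exp M * (y - x)" if "x \<le> y" "y \<le> M" for x y :: real
  proof -
    have "1 + (x - y) \<le> exp (x - y)" by (rule exp_ge_add_one_self)
    hence "exp y * (1 + (x - y)) \<le> exp y * exp (x - y)" by (simp add: mult_left_mono)
    also have "\<dots> = exp x" by (simp add: exp_diff)
    finally have "exp y - exp x \<le> exp y * (y - x)" by (simp add: algebra_simps)
    also have "\<dots> \<le> exp M * (y - x)" using that by (intro mult_right_mono) auto
    finally show ?thesis .
  qed
  show ?thesis
  proof (cases "a \<le> b")
    case True
    have "exp a \<le> exp b" using True by simp
    thus ?thesis using key[OF True assms(4)] True by (simp add: abs_if)
  next
    case False
    have "exp b \<le> exp a" using False by simp
    thus ?thesis using key[of b a] False assms by (simp add: abs_if)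
  qed
qed

lemma integrable_bdd_restrict:
  fixes u :: "real \<Rightarrow> real"
  assumes m: "u \<in> borel_measurable (restrict_space borel {0..T})"
    and b: "\<forall>t\<in>{0..T}. \<bar>u t\<bar> \<le> c"
  shows "u integrable_on {0..T}"
proof -
  have m2: "(\<lambda>x. indicator {0..T} x *\<^sub>R u x) \<in> borel_measurable borel"
    using m by (subst (asm) borel_measurable_restrict_space_iff) auto
  have "set_integrable lborel {0..T} u"
    unfolding set_integrable_def
  proof (rule integrableI_bounded_set[where A="{0..T}" and B=c])
    show "(\<lambda>x. indicat_real {0..T} x *\<^sub>R u x) \<in> borel_measurable lborel" using m2 by simp
  qed (use b in \<open>auto split: split_indicator simp: emeasure_lborel_Icc_eq\<close>)
  thus ?thesis by (rule set_borel_integral_eq_integral)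
qed

lemma cs_integral:
  fixes u :: "real \<Rightarrow> real"
  assumes iu: "u integrable_on {0..t}" and iu2: "(\<lambda>x. (u x)\<^sup>2) integrable_on {0..t}"
    and t: "0 \<le> t"
  shows "(integral {0..t} u)\<^sup>2 \<le> t * integral {0..t} (\<lambda>x. (u x)\<^sup>2)"
proof (cases "t = 0")
  case True
  thus ?thesis by simp
next
  case False
  hence tp: "t > 0" using t by simp
  define I where "I = integral {0..t} u"
  define a where "a = I / t"
  have pw: "2 * a * u x - a\<^sup>2 \<le> (u x)\<^sup>2" for x
  proof -
    have "0 \<le> (u x - a)\<^sup>2" by simp
    thus ?thesis by (simp add: power2_eq_square algebra_simps)
  qed
  have i1: "(\<lambda>x. 2 * a * u x) integrable_on {0..t}" using integrable_cmul[OF iu, of "2*a"] by simp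
  have i2: "(\<lambda>x. a\<^sup>2) integrable_on {0..t}" by (rule integrable_const_ivl)
  have "integral {0..t} (\<lambda>x. 2 * a * u x - a\<^sup>2) = 2 * a * I - a\<^sup>2 * t"
    using i1 i2 t by (simp add: integral_diff I_def)
  moreover have "integral {0..t} (\<lambda>x. 2 * a * u x - a\<^sup>2) \<le> integral {0..t} (\<lambda>x. (u x)\<^sup>2)"
    by (rule integral_le[OF integrable_diff[OF i1 i2] iu2]) (use pw in auto)
  moreover have "2 * a * I - a\<^sup>2 * t = I\<^sup>2 / t" using tp by (simp add: a_def field_simps power2_eq_square)
  ultimately have "I\<^sup>2 / t \<le> integral {0..t} (\<lambda>x. (u x)\<^sup>2)" by simp
  thus ?thesis using tp by (simp add: I_def field_simps)
qed

definition Gf :: "real \<Rightarrow> real \<Rightarrow> real \<Rightarrow> real \<Rightarrow> real" where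
  "Gf B lam c y = c / (1 + (1 + B * c) * (exp (lam * y) - 1))"

lemma gfun_eq: "gfun B lam c0 f t k = Gf B lam (c0 k) (integral {0..t} (\<lambda>\<tau>. f \<tau> k))"
  unfolding gfun_def Gf_def phi_def Acoef_def by (simp add: algebra_simps)

lemma G_basic:
  fixes B lam c y :: real
  assumes c: "0 \<le> c" and P: "0 \<le> 1 + B * c" and y: "0 \<le> y" and lam: "0 < lam"
  shows "1 \<le> 1 + (1 + B * c) * (exp (lam * y) - 1)"
    and "0 \<le> Gf B lam c y" and "Gf B lam c y \<le> c"
    and "c - Gf B lam c y \<le> c * (1 + B * c) * (exp (lam * y) - 1)"
proof -
  have E: "1 \<le> exp (lam * y)" using lam y by simp
  have P0: "0 \<le> (1 + B * c) * (exp (lam * y) - 1)" using P E by simp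
  show D: "1 \<le> 1 + (1 + B * c) * (exp (lam * y) - 1)" using P0 by simp
  show "0 \<le> Gf B lam c y" unfolding Gf_def using c D by simp
  show "Gf B lam c y \<le> c" unfolding Gf_def using c D
    by (simp add: divide_le_eq mult_le_cancel_left1 order_trans[OF D] mult_left_mono[of 1 _ c, simplified])
  define X where "X = (1 + B * c) * (exp (lam * y) - 1)"
  have X0: "0 \<le> X" using P0 X_def by simp
  have "c - Gf B lam c y = c * X / (1 + X)" unfolding Gf_def X_def[symmetric] using X0
    by (simp add: field_simps)
  also have "\<dots> \<le> c * X"
  proof -
    have "c*X \<le> c*X*(1+X)" using mult_nonneg_nonneg[OF mult_nonneg_nonneg[OF c X0] X0] by (simp add: algebra_simps)
    thus ?thesis using X0 by (simp add: pos_divide_le_eq)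
  qed
  finally show "c - Gf B lam c y \<le> c * (1 + B * c) * (exp (lam * y) - 1)" by (simp add: X_def mult.assoc)
qed

definition Lc :: "real \<Rightarrow> real \<Rightarrow> real \<Rightarrow> real" where
  "Lc C lam Y = (1 + (1 + C) * (exp (lam * Y) - 1)) + C * exp (lam * Y) + C * (1 + C) * lam * exp (lam * Y)"

lemma G_lip:
  fixes B lam c c' y y' C Y :: real
  assumes B: "\<bar>B\<bar> = 1" and lam: "0 < lam"
    and c: "0 \<le> c" "c \<le> C" and c': "0 \<le> c'" "c' \<le> C"
    and P: "0 \<le> 1 + B * c" and P': "0 \<le> 1 + B * c'"
    and y: "0 \<le> y" "y \<le> Y" and y': "0 \<le> y'" "y' \<le> Y"
  shows "\<bar>Gf B lam c y - Gf B lam c' y'\<bar> \<le> Lc C lam Y * (\<bar>c - c'\<bar> + \<bar>y - y'\<bar>)"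
proof -
  define P1 where "P1 = 1 + B * c"
  define P2 where "P2 = 1 + B * c'"
  define E where "E = exp (lam * y)"
  define E' where "E' = exp (lam * y')"
  define Em where "Em = exp (lam * Y)"
  define D where "D = 1 + P1 * (E - 1)"
  define D' where "D' = 1 + P2 * (E' - 1)"
  have D1: "1 \<le> D" using G_basic(1)[OF c(1) P y(1) lam] by (simp add: D_def P1_def E_def)
  have D'1: "1 \<le> D'" using G_basic(1)[OF c'(1) P' y'(1) lam] by (simp add: D'_def P2_def E'_def)
  have G1: "Gf B lam c y = c / D" by (simp add: Gf_def D_def P1_def E_def)
  have G2: "Gf B lam c' y' = c' / D'" by (simp add: Gf_def D'_def P2_def E'_def)
  have diff: "c / D - c' / D' = (c * D' - c' * D) / (D * D')" using D1 D'1 by (simp add: field_simps)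
  have DD: "1 \<le> D * D'" using D1 D'1 by (metis mult_mono' mult_1 zero_le_one)
  have s1: "\<bar>(c * D' - c' * D) / (D * D')\<bar> \<le> \<bar>c * D' - c' * D\<bar>"
  proof -
    have q: "\<bar>D * D'\<bar> = D * D'" using DD by simp
    have "\<bar>c * D' - c' * D\<bar> \<le> \<bar>c * D' - c' * D\<bar> * (D * D')"
      using mult_left_mono[OF DD, of "\<bar>c * D' - c' * D\<bar>"] by simp
    thus ?thesis using DD by (simp add: abs_divide q pos_divide_le_eq)
  qed
  have ring1: "c * D' - c' * D = (c - c') * D' + c' * (D' - D)" by (simp add: algebra_simps)
  have ring2: "D' - D = (P2 - P1) * (E' - 1) + P1 * (E' - E)" by (simp add: D_def D'_def algebra_simps)
  have E'1: "1 \<le> E'" using lam y' by (simp add: E'_def)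
  have E1: "1 \<le> E" using lam y by (simp add: E_def)
  have E'm: "E' \<le> Em" using lam y' by (simp add: E'_def Em_def)
  have Em1: "1 \<le> Em" using lam y y' by (simp add: Em_def)
  have P2le: "P2 \<le> 1 + C" using B c' by (auto simp: P2_def abs_if split: if_splits)
  have P1le: "P1 \<le> 1 + C" using B c by (auto simp: P1_def abs_if split: if_splits)
  have P1ge: "0 \<le> P1" using P by (simp add: P1_def)
  have P2ge: "0 \<le> P2" using P' by (simp add: P2_def)
  have D'le: "D' \<le> 1 + (1 + C) * (Em - 1)"
    unfolding D'_def using P2le P2ge E'1 E'm by (intro add_left_mono mult_mono) auto
  have PP: "\<bar>P2 - P1\<bar> = \<bar>c - c'\<bar>"
  proof -
    have "P2 - P1 = B * (c' - c)" by (simp add: P1_def P2_def algebra_simps)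
    thus ?thesis using B by (simp add: abs_mult abs_minus_commute)
  qed
  have t1: "\<bar>(P2 - P1) * (E' - 1)\<bar> \<le> \<bar>c - c'\<bar> * Em"
    using PP E'1 E'm by (simp add: abs_mult mult_left_mono)
  have EE: "\<bar>E' - E\<bar> \<le> Em * (lam * \<bar>y - y'\<bar>)"
  proof -
    have "\<bar>E' - E\<bar> \<le> Em * \<bar>lam * y' - lam * y\<bar>" unfolding E'_def E_def Em_def
      using lam y y' by (intro exp_lip) (auto intro: mult_left_mono)
    also have "\<bar>lam * y' - lam * y\<bar> = lam * \<bar>y - y'\<bar>" using lam
      by (simp add: right_diff_distrib[symmetric] abs_mult abs_minus_commute)
    finally show ?thesis .
  qed
  have t2: "\<bar>P1 * (E' - E)\<bar> \<le> (1 + C) * (Em * (lam * \<bar>y - y'\<bar>))"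
    using P1ge P1le EE by (simp add: abs_mult mult_mono)
  have C0: "0 \<le> C" using c by simp
  have dD: "\<bar>D' - D\<bar> \<le> \<bar>c - c'\<bar> * Em + (1 + C) * (Em * (lam * \<bar>y - y'\<bar>))"
    using ring2 t1 t2 abs_triangle_ineq[of "(P2 - P1) * (E' - 1)" "P1 * (E' - E)"] by linarith
  have u1: "\<bar>(c - c') * D'\<bar> \<le> \<bar>c - c'\<bar> * (1 + (1 + C) * (Em - 1))"
    using D'le D'1 by (simp add: abs_mult mult_left_mono)
  have u2: "\<bar>c' * (D' - D)\<bar> \<le> C * (\<bar>c - c'\<bar> * Em + (1 + C) * (Em * (lam * \<bar>y - y'\<bar>)))"
    using c' dD by (simp add: abs_mult mult_mono)
  have "\<bar>Gf B lam c y - Gf B lam c' y'\<bar> \<le> \<bar>(c - c') * D'\<bar> + \<bar>c' * (D' - D)\<bar>"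
    using G1 G2 diff s1 ring1 abs_triangle_ineq[of "(c - c') * D'" "c' * (D' - D)"] by simp
  also have "\<dots> \<le> \<bar>c - c'\<bar> * (1 + (1 + C) * (Em - 1)) + C * (\<bar>c - c'\<bar> * Em + (1 + C) * (Em * (lam * \<bar>y - y'\<bar>)))"
    using u1 u2 by linarith
  also have "\<dots> \<le> Lc C lam Y * (\<bar>c - c'\<bar> + \<bar>y - y'\<bar>)"
  proof -
    have a: "0 \<le> 1 + (1 + C) * (Em - 1)" using C0 Em1 by simp
    have b: "0 \<le> C * Em" using C0 Em1 by simp
    have d: "0 \<le> C * (1 + C) * lam * Em" using C0 Em1 lam by simp
    have "\<bar>c - c'\<bar> * (1 + (1 + C) * (Em - 1)) + C * (\<bar>c - c'\<bar> * Em + (1 + C) * (Em * (lam * \<bar>y - y'\<bar>)))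
       = \<bar>c - c'\<bar> * ((1 + (1 + C) * (Em - 1)) + C * Em) + \<bar>y - y'\<bar> * (C * (1 + C) * lam * Em)"
      by (simp add: algebra_simps)
    also have "\<dots> \<le> \<bar>c - c'\<bar> * Lc C lam Y + \<bar>y - y'\<bar> * Lc C lam Y"
    proof -
      have L1: "(1 + (1 + C) * (Em - 1)) + C * Em \<le> Lc C lam Y"
        unfolding Lc_def Em_def[symmetric] using d by linarith
      have L2: "C * (1 + C) * lam * Em \<le> Lc C lam Y"
        unfolding Lc_def Em_def[symmetric] using a b by linarith
      show ?thesis using mult_left_mono[OF L1 abs_ge_zero[of "c - c'"]] mult_left_mono[OF L2 abs_ge_zero[of "y - y'"]]
        by linarith
    qed
    finally show ?thesis by (simp add: algebra_simps)
  qed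
  finally show ?thesis .
qed

lemma l2_from_partial:
  assumes h: "h > 0" and b: "\<And>N. h * (\<Sum>n<N. (u (Suc n))\<^sup>2) \<le> X"
  shows "inL2 u" "l2sq h u \<le> X"
proof -
  have b': "(\<Sum>n<N. (u (Suc n))\<^sup>2) \<le> X / h" for N using b[of N] h by (simp add: field_simps)
  show s: "inL2 u" unfolding inL2_def by (rule summableI_nonneg_bounded[OF _ b']) simp
  have "(\<Sum>n. (u (Suc n))\<^sup>2) \<le> X / h" using s unfolding inL2_def by (rule suminf_le_const[OF _ b'])
  thus "l2sq h u \<le> X" unfolding l2sq_def using h by (simp add: field_simps)
qed

lemma l2_partial_le:
  assumes h: "h > 0" and s: "inL2 u"
  shows "h * (\<Sum>n<N. (u (Suc n))\<^sup>2) \<le> l2sq h u"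
  unfolding l2sq_def using h s unfolding inL2_def
  by (intro mult_left_mono sum_le_suminf) auto

lemma l2_nonneg:
  assumes h: "h > 0" and s: "inL2 u"
  shows "0 \<le> l2sq h u"
  unfolding l2sq_def using h s unfolding inL2_def
  by (intro mult_nonneg_nonneg suminf_nonneg) auto

lemma integrable_bdd_sub:
  fixes u :: "real \<Rightarrow> real"
  assumes m: "u \<in> borel_measurable (restrict_space borel {0..T})"
    and b: "\<forall>t\<in>{0..T}. \<bar>u t\<bar> \<le> c" and t: "0 \<le> t" "t \<le> T"
  shows "u integrable_on {0..t}" "(\<lambda>x. (u x)\<^sup>2) integrable_on {0..t}"
proof -
  have "u integrable_on {0..T}" by (rule integrable_bdd_restrict[OF m b])
  thus "u integrable_on {0..t}" by (rule integrable_on_subinterval) (use t in auto)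
  have m2: "(\<lambda>x. (u x)\<^sup>2) \<in> borel_measurable (restrict_space borel {0..T})"
    using m by measurable
  have b2: "\<forall>x\<in>{0..T}. \<bar>(u x)\<^sup>2\<bar> \<le> c\<^sup>2"
  proof
    fix x assume "x \<in> {0..T}"
    hence "\<bar>u x\<bar> \<le> c" using b by auto
    hence "\<bar>u x\<bar>\<^sup>2 \<le> c\<^sup>2" by (intro power_mono) auto
    thus "\<bar>(u x)\<^sup>2\<bar> \<le> c\<^sup>2" by simp
  qed
  have "(\<lambda>x. (u x)\<^sup>2) integrable_on {0..T}" by (rule integrable_bdd_restrict[OF m2 b2])
  thus "(\<lambda>x. (u x)\<^sup>2) integrable_on {0..t}" by (rule integrable_on_subinterval) (use t in auto)
qed

lemma sum_int_bound:
  fixes w :: "nat \<Rightarrow> real \<Rightarrow> real"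
  assumes t: "0 \<le> t" and h: "h > 0"
    and iw: "\<And>k. w k integrable_on {0..t}" and iw2: "\<And>k. (\<lambda>x. (w k x)\<^sup>2) integrable_on {0..t}"
  shows "h * (\<Sum>n<N. (integral {0..t} (w (Suc n)))\<^sup>2)
          \<le> t * integral {0..t} (\<lambda>x. h * (\<Sum>n<N. (w (Suc n) x)\<^sup>2))"
proof -
  have "h * (\<Sum>n<N. (integral {0..t} (w (Suc n)))\<^sup>2)
        \<le> h * (\<Sum>n<N. t * integral {0..t} (\<lambda>x. (w (Suc n) x)\<^sup>2))"
    using h by (intro mult_left_mono sum_mono cs_integral iw iw2 t) auto
  also have "\<dots> = t * (h * integral {0..t} (\<lambda>x. (\<Sum>n<N. (w (Suc n) x)\<^sup>2)))"
    by (subst integral_sum) (auto intro: iw2 simp: sum_distrib_left algebra_simps)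
  also have "\<dots> = t * integral {0..t} (\<lambda>x. h * (\<Sum>n<N. (w (Suc n) x)\<^sup>2))"
    by simp
  finally show ?thesis .
qed

lemma int_bounds:
  fixes u :: "real \<Rightarrow> real"
  assumes iu: "u integrable_on {0..t}" and t: "0 \<le> t" and b: "\<And>x. x \<in> {0..t} \<Longrightarrow> 0 \<le> u x \<and> u x \<le> a"
  shows "0 \<le> integral {0..t} u" "integral {0..t} u \<le> t * a"
proof -
  show "0 \<le> integral {0..t} u"
    by (rule Henstock_Kurzweil_Integration.integral_nonneg[OF iu]) (use b in auto)
  have "integral {0..t} u \<le> integral {0..t} (\<lambda>x. a)"
    by (rule integral_le[OF iu integrable_const_ivl]) (use b in auto)
  thus "integral {0..t} u \<le> t * a" using t by simp
qed

lemma int_le_const: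
  fixes u :: "real \<Rightarrow> real"
  assumes iu: "u integrable_on {0..t}" and t: "0 \<le> t" and b: "\<And>x. x \<in> {0..t} \<Longrightarrow> u x \<le> a"
  shows "integral {0..t} u \<le> t * a"
proof -
  have "integral {0..t} u \<le> integral {0..t} (\<lambda>x. a)"
    by (rule integral_le[OF iu integrable_const_ivl]) (use b in auto)
  thus ?thesis using t by simp
qed

lemma est1:
  fixes B lam C h t T \<eta> S :: real and c0 :: "nat \<Rightarrow> real" and f :: "real \<Rightarrow> nat \<Rightarrow> real"
  assumes h: "h > 0" and B: "\<bar>B\<bar> = 1" and lam: "lam > 0" and t: "0 \<le> t" "t \<le> T" and C: "C \<ge> 0"
    and eta: "\<eta> \<ge> 0"
    and c0: "\<And>k. 0 \<le> c0 k" "\<And>k. c0 k \<le> C" "\<And>k. 0 \<le> 1 + B * c0 k"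
    and cL2: "inL2 (\<lambda>k. C - c0 k)"
    and fb: "\<And>\<tau> k. \<tau> \<in> {0..t} \<Longrightarrow> 0 \<le> f \<tau> k \<and> f \<tau> k \<le> \<eta>"
    and if1: "\<And>k. (\<lambda>\<tau>. f \<tau> k) integrable_on {0..t}"
    and if2: "\<And>k. (\<lambda>\<tau>. (f \<tau> k)\<^sup>2) integrable_on {0..t}"
    and Sb: "\<And>\<tau> N. \<tau> \<in> {0..t} \<Longrightarrow> h * (\<Sum>n<N. (f \<tau> (Suc n))\<^sup>2) \<le> S"
  shows "inL2 (\<lambda>k. C - gfun B lam c0 f t k)"
    "l2sq h (\<lambda>k. C - gfun B lam c0 f t k) \<le> 2 * l2sq h (\<lambda>k. C - c0 k) + 2 * (C * (1 + C) * lam * exp (lam * (\<eta> * T)))\<^sup>2 * (t\<^sup>2 * S)"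
proof -
  define I where "I k = integral {0..t} (\<lambda>\<tau>. f \<tau> k)" for k
  define K0 where "K0 = C * (1 + C) * lam * exp (lam * (\<eta> * T))"
  have I0: "0 \<le> I k" for k unfolding I_def using int_bounds(1)[OF if1 t(1)] fb by blast
  have IY: "I k \<le> \<eta> * T" for k
  proof -
    have "I k \<le> t * \<eta>" unfolding I_def using int_bounds(2)[OF if1 t(1)] fb by blast
    also have "\<dots> \<le> \<eta> * T" using mult_left_mono[OF t(2) eta] by (simp add: mult.commute)
    finally show ?thesis .
  qed
  have pw: "(C - gfun B lam c0 f t k)\<^sup>2 \<le> 2 * (C - c0 k)\<^sup>2 + 2 * K0\<^sup>2 * (I k)\<^sup>2" for k
  proof -
    have g: "gfun B lam c0 f t k = Gf B lam (c0 k) (I k)" by (simp add: gfun_eq I_def)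
    note GB = G_basic[OF c0(1)[of k] c0(3)[of k] I0[of k] lam]
    have E: "exp (lam * I k) - 1 \<le> exp (lam * (\<eta> * T)) * (lam * I k)"
    proof -
      have "\<bar>exp (lam * I k) - exp 0\<bar> \<le> exp (lam * (\<eta> * T)) * \<bar>lam * I k - 0\<bar>"
        using lam I0[of k] IY[of k] by (intro exp_lip) (auto intro: mult_left_mono)
      thus ?thesis using lam I0[of k] by simp
    qed
    have P: "1 + B * c0 k \<le> 1 + C" using B c0(1,2)[of k] by (auto simp: abs_if split: if_splits)
    have cP: "c0 k * (1 + B * c0 k) \<le> C * (1 + C)"
      using c0(1,2,3)[of k] P by (intro mult_mono) auto
    have E0: "0 \<le> exp (lam * I k) - 1" using lam I0[of k] by simp
    have "c0 k - Gf B lam (c0 k) (I k) \<le> c0 k * (1 + B * c0 k) * (exp (lam * I k) - 1)" by (rule GB(4))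
    also have "\<dots> \<le> C * (1 + C) * (exp (lam * (\<eta> * T)) * (lam * I k))"
      by (rule mult_mono[OF cP E]) (use E0 C mult_nonneg_nonneg[OF C, of "1+C"] in auto)
    also have "\<dots> = K0 * I k" by (simp add: K0_def algebra_simps)
    finally have d1: "c0 k - Gf B lam (c0 k) (I k) \<le> K0 * I k" .
    have d0: "0 \<le> c0 k - Gf B lam (c0 k) (I k)" using GB(3) by simp
    have sq: "(c0 k - Gf B lam (c0 k) (I k))\<^sup>2 \<le> K0\<^sup>2 * (I k)\<^sup>2"
      using power_mono[OF d1 d0, of 2] by (simp add: power_mult_distrib)
    have "(C - Gf B lam (c0 k) (I k))\<^sup>2 = ((C - c0 k) + (c0 k - Gf B lam (c0 k) (I k)))\<^sup>2" by simp
    also have "\<dots> \<le> 2 * (C - c0 k)\<^sup>2 + 2 * (c0 k - Gf B lam (c0 k) (I k))\<^sup>2"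
      by (smt (verit) power2_diff zero_le_power2 power2_sum)
    finally show ?thesis using sq g by simp
  qed
  have part: "h * (\<Sum>n<N. (C - gfun B lam c0 f t (Suc n))\<^sup>2) \<le> 2 * l2sq h (\<lambda>k. C - c0 k) + 2 * K0\<^sup>2 * (t\<^sup>2 * S)" for N
  proof -
    have "h * (\<Sum>n<N. (C - gfun B lam c0 f t (Suc n))\<^sup>2)
          \<le> h * (\<Sum>n<N. 2 * (C - c0 (Suc n))\<^sup>2 + 2 * K0\<^sup>2 * (I (Suc n))\<^sup>2)"
      using h by (intro mult_left_mono sum_mono pw) auto
    also have "\<dots> = 2 * (h * (\<Sum>n<N. (C - c0 (Suc n))\<^sup>2)) + 2 * K0\<^sup>2 * (h * (\<Sum>n<N. (I (Suc n))\<^sup>2))"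
      by (simp add: sum.distrib sum_distrib_left algebra_simps)
    also have "\<dots> \<le> 2 * l2sq h (\<lambda>k. C - c0 k) + 2 * K0\<^sup>2 * (t\<^sup>2 * S)"
    proof -
      have a: "h * (\<Sum>n<N. (C - c0 (Suc n))\<^sup>2) \<le> l2sq h (\<lambda>k. C - c0 k)"
        using l2_partial_le[OF h cL2, of N] by simp
      have "h * (\<Sum>n<N. (I (Suc n))\<^sup>2) \<le> t * integral {0..t} (\<lambda>x. h * (\<Sum>n<N. (f x (Suc n))\<^sup>2))"
        unfolding I_def using sum_int_bound[OF t(1) h, of "\<lambda>k \<tau>. f \<tau> k" N] if1 if2 by simp
      also have "\<dots> \<le> t * (t * S)"
      proof (rule mult_left_mono[OF _ t(1)], rule int_le_const[OF _ t(1)])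
        show "(\<lambda>x. h * (\<Sum>n<N. (f x (Suc n))\<^sup>2)) integrable_on {0..t}"
        proof -
          have "(\<lambda>x. \<Sum>n<N. (f x (Suc n))\<^sup>2) integrable_on {0..t}"
            using integrable_sum[of "{..<N}" "\<lambda>n x. (f x (Suc n))\<^sup>2" "{0..t}"] if2 by simp
          from integrable_cmul[OF this, of h] show ?thesis by simp
        qed
        show "\<And>x. x \<in> {0..t} \<Longrightarrow> h * (\<Sum>n<N. (f x (Suc n))\<^sup>2) \<le> S" by (rule Sb)
      qed
      finally have b: "h * (\<Sum>n<N. (I (Suc n))\<^sup>2) \<le> t\<^sup>2 * S" by (simp add: power2_eq_square)
      show ?thesis using a mult_left_mono[OF b, of "2 * K0\<^sup>2"] by simp
    qed
    finally show ?thesis .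
  qed
  show "inL2 (\<lambda>k. C - gfun B lam c0 f t k)" by (rule l2_from_partial(1)[OF h part])
  show "l2sq h (\<lambda>k. C - gfun B lam c0 f t k) \<le> 2 * l2sq h (\<lambda>k. C - c0 k) + 2 * (C * (1 + C) * lam * exp (lam * (\<eta> * T)))\<^sup>2 * (t\<^sup>2 * S)"
    using l2_from_partial(2)[OF h part] by (simp add: K0_def)
qed

lemma Lc_nonneg: "0 \<le> C \<Longrightarrow> 0 < lam \<Longrightarrow> 0 \<le> Y \<Longrightarrow> 0 \<le> Lc C lam Y"
  unfolding Lc_def by (intro add_nonneg_nonneg mult_nonneg_nonneg) auto

lemma est3:
  fixes B lam C h t T \<eta> J :: real and c0 :: "nat \<Rightarrow> real" and f :: "real \<Rightarrow> nat \<Rightarrow> real"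
    and F :: "real \<Rightarrow> real"
  assumes h: "h > 0" and B: "\<bar>B\<bar> = 1" and lam: "lam > 0" and t: "0 \<le> t" "t \<le> T" and C: "C \<ge> 0"
    and eta: "\<eta> \<ge> 0"
    and c0: "\<And>k. 0 \<le> c0 k" "\<And>k. c0 k \<le> C" "\<And>k. 0 \<le> 1 + B * c0 k"
    and cDL2: "inL2 (Dp h c0)"
    and fb: "\<And>\<tau> k. \<tau> \<in> {0..t} \<Longrightarrow> 0 \<le> f \<tau> k \<and> f \<tau> k \<le> \<eta>"
    and if1: "\<And>k. (\<lambda>\<tau>. f \<tau> k) integrable_on {0..t}"
    and id1: "\<And>k. (\<lambda>\<tau>. Dp h (f \<tau>) k) integrable_on {0..t}"
    and id2: "\<And>k. (\<lambda>\<tau>. (Dp h (f \<tau>) k)\<^sup>2) integrable_on {0..t}"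
    and Fb: "\<And>\<tau> N. \<tau> \<in> {0..t} \<Longrightarrow> h * (\<Sum>n<N. (Dp h (f \<tau>) (Suc n))\<^sup>2) \<le> F \<tau>"
    and iF: "F integrable_on {0..t}" and FJ: "integral {0..t} F \<le> J" and J0: "0 \<le> J"
  shows "inL2 (Dp h (gfun B lam c0 f t))"
    "l2sq h (Dp h (gfun B lam c0 f t)) \<le> 2 * (Lc C lam (\<eta> * T))\<^sup>2 * (l2sq h (Dp h c0) + T * J)"
proof -
  define I where "I k = integral {0..t} (\<lambda>\<tau>. f \<tau> k)" for k
  define L where "L = Lc C lam (\<eta> * T)"
  have L0: "0 \<le> L" unfolding L_def using C lam eta t by (intro Lc_nonneg) auto
  have I0: "0 \<le> I k" for k unfolding I_def using int_bounds(1)[OF if1 t(1)] fb by blast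
  have IY: "I k \<le> \<eta> * T" for k
  proof -
    have "I k \<le> t * \<eta>" unfolding I_def using int_bounds(2)[OF if1 t(1)] fb by blast
    also have "\<dots> \<le> \<eta> * T" using mult_left_mono[OF t(2) eta] by (simp add: mult.commute)
    finally show ?thesis .
  qed
  define DI where "DI k = integral {0..t} (\<lambda>\<tau>. Dp h (f \<tau>) k)" for k
  have DIe: "DI k = (I (Suc k) - I k) / h" for k
  proof -
    have "(\<lambda>\<tau>. Dp h (f \<tau>) k) = (\<lambda>\<tau>. (1/h) *\<^sub>R (f \<tau> (Suc k) - f \<tau> k))"
      by (auto simp: Dp_def divide_inverse mult.commute)
    hence "DI k = (1/h) * integral {0..t} (\<lambda>\<tau>. f \<tau> (Suc k) - f \<tau> k)"
      unfolding DI_def by simp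
    also have "\<dots> = (1/h) * (I (Suc k) - I k)" unfolding I_def by (simp add: integral_diff[OF if1 if1])
    finally show ?thesis by simp
  qed
  have pw: "(Dp h (gfun B lam c0 f t) k)\<^sup>2 \<le> 2 * L\<^sup>2 * ((Dp h c0 k)\<^sup>2 + (DI k)\<^sup>2)" for k
  proof -
    have g: "gfun B lam c0 f t j = Gf B lam (c0 j) (I j)" for j by (simp add: gfun_eq I_def)
    have lip: "\<bar>gfun B lam c0 f t (Suc k) - gfun B lam c0 f t k\<bar> \<le> L * (\<bar>c0 (Suc k) - c0 k\<bar> + \<bar>I (Suc k) - I k\<bar>)"
      unfolding g L_def
      by (rule G_lip[OF B lam c0(1) c0(2) c0(1) c0(2) c0(3) c0(3) I0 IY I0 IY])
    have "\<bar>Dp h (gfun B lam c0 f t) k\<bar> = \<bar>gfun B lam c0 f t (Suc k) - gfun B lam c0 f t k\<bar> / h"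
      using h by (simp add: Dp_def abs_divide)
    also have "\<dots> \<le> L * (\<bar>c0 (Suc k) - c0 k\<bar> + \<bar>I (Suc k) - I k\<bar>) / h"
      using lip h by (simp add: divide_right_mono)
    also have "\<dots> = L * (\<bar>Dp h c0 k\<bar> + \<bar>DI k\<bar>)"
      using h by (simp add: Dp_def DIe abs_divide add_divide_distrib algebra_simps)
    finally have a: "\<bar>Dp h (gfun B lam c0 f t) k\<bar> \<le> L * (\<bar>Dp h c0 k\<bar> + \<bar>DI k\<bar>)" .
    have "(Dp h (gfun B lam c0 f t) k)\<^sup>2 = \<bar>Dp h (gfun B lam c0 f t) k\<bar>\<^sup>2" by simp
    also have "\<dots> \<le> (L * (\<bar>Dp h c0 k\<bar> + \<bar>DI k\<bar>))\<^sup>2" by (rule power_mono[OF a]) simp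
    also have "\<dots> = L\<^sup>2 * (\<bar>Dp h c0 k\<bar> + \<bar>DI k\<bar>)\<^sup>2" by (simp add: power_mult_distrib)
    also have "\<dots> \<le> L\<^sup>2 * (2 * ((Dp h c0 k)\<^sup>2 + (DI k)\<^sup>2))"
    proof (rule mult_left_mono)
      show "(\<bar>Dp h c0 k\<bar> + \<bar>DI k\<bar>)\<^sup>2 \<le> 2 * ((Dp h c0 k)\<^sup>2 + (DI k)\<^sup>2)"
        by (smt (verit) power2_diff zero_le_power2 power2_sum power2_abs)
    qed simp
    finally show ?thesis by (simp add: algebra_simps)
  qed
  have part: "h * (\<Sum>n<N. (Dp h (gfun B lam c0 f t) (Suc n))\<^sup>2) \<le> 2 * L\<^sup>2 * (l2sq h (Dp h c0) + T * J)" for N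
  proof -
    have "h * (\<Sum>n<N. (Dp h (gfun B lam c0 f t) (Suc n))\<^sup>2)
          \<le> h * (\<Sum>n<N. 2 * L\<^sup>2 * ((Dp h c0 (Suc n))\<^sup>2 + (DI (Suc n))\<^sup>2))"
      using h by (intro mult_left_mono sum_mono pw) auto
    also have "\<dots> = 2 * L\<^sup>2 * (h * (\<Sum>n<N. (Dp h c0 (Suc n))\<^sup>2) + h * (\<Sum>n<N. (DI (Suc n))\<^sup>2))"
      by (simp add: sum.distrib sum_distrib_left algebra_simps)
    also have "\<dots> \<le> 2 * L\<^sup>2 * (l2sq h (Dp h c0) + T * J)"
    proof (rule mult_left_mono[OF add_mono])
      show "h * (\<Sum>n<N. (Dp h c0 (Suc n))\<^sup>2) \<le> l2sq h (Dp h c0)"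
        using l2_partial_le[OF h cDL2, of N] by simp
      have "h * (\<Sum>n<N. (DI (Suc n))\<^sup>2) \<le> t * integral {0..t} (\<lambda>x. h * (\<Sum>n<N. (Dp h (f x) (Suc n))\<^sup>2))"
        unfolding DI_def using sum_int_bound[OF t(1) h, of "\<lambda>k \<tau>. Dp h (f \<tau>) k" N] id1 id2 by simp
      also have "\<dots> \<le> t * J"
      proof (rule mult_left_mono[OF _ t(1)])
        have i: "(\<lambda>x. h * (\<Sum>n<N. (Dp h (f x) (Suc n))\<^sup>2)) integrable_on {0..t}"
        proof -
          have "(\<lambda>x. \<Sum>n<N. (Dp h (f x) (Suc n))\<^sup>2) integrable_on {0..t}"
            using integrable_sum[of "{..<N}" "\<lambda>n x. (Dp h (f x) (Suc n))\<^sup>2" "{0..t}"] id2 by simp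
          from integrable_cmul[OF this, of h] show ?thesis by simp
        qed
        have "integral {0..t} (\<lambda>x. h * (\<Sum>n<N. (Dp h (f x) (Suc n))\<^sup>2)) \<le> integral {0..t} F"
          by (rule integral_le[OF i iF]) (rule Fb)
        thus "integral {0..t} (\<lambda>x. h * (\<Sum>n<N. (Dp h (f x) (Suc n))\<^sup>2)) \<le> J" using FJ by simp
      qed
      also have "\<dots> \<le> T * J" using mult_right_mono[OF t(2) J0] .
      finally show "h * (\<Sum>n<N. (DI (Suc n))\<^sup>2) \<le> T * J" .
    qed simp
    finally show ?thesis .
  qed
  show "inL2 (Dp h (gfun B lam c0 f t))" by (rule l2_from_partial(1)[OF h part])
  show "l2sq h (Dp h (gfun B lam c0 f t)) \<le> 2 * (Lc C lam (\<eta> * T))\<^sup>2 * (l2sq h (Dp h c0) + T * J)"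
    using l2_from_partial(2)[OF h part] by (simp add: L_def)
qed

theorem mainTheorem6:
  fixes B C0 cm lam T \<eta> :: real
  assumes hB: "B \<in> {-1, 1}"
    and hlam: "lam > 0" and hT: "T > 0" and heta: "\<eta> > 0" and hcm: "cm > 0"
    and hphi: "\<exists>\<phi>min \<phi>max. 0 < \<phi>min \<and> \<phi>min \<le> \<phi>max \<and>
                 (\<forall>c\<in>{0..C0}. \<phi>min \<le> phi B c \<and> phi B c \<le> \<phi>max)"
    and hB1: "B = 1 \<Longrightarrow> \<eta> < 1"
  shows "\<exists>k1 \<kappa> C1 C2. k1 > 0 \<and> \<kappa> > 0 \<and> C1 > 0 \<and> C2 > 0 \<and>
    (\<forall>h \<beta> \<psi> s0 c0 f K.
       h > 0 \<and>
       1/4 < \<beta> \<and> \<beta> < 1/2 \<and> holder_on \<beta> {0..T} \<psi> \<and>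
       (\<forall>t\<in>{0..T}. 0 \<le> \<psi> t \<and> \<psi> t \<le> \<eta>) \<and> \<psi> 0 = 0 \<and>
       (\<forall>k. 0 \<le> s0 k \<and> s0 k \<le> \<eta>) \<and> s0 0 = 0 \<and> inL2 s0 \<and> inL2 (Dp h s0) \<and>
       (\<forall>k. cm \<le> c0 k \<and> c0 k \<le> C0) \<and> inL2 (\<lambda>k. C0 - c0 k) \<and> inL2 (Dp h c0) \<and>
       condF h T \<eta> \<psi> K f
     \<longrightarrow>
       (let g = gfun B lam c0 f;
            supf = (SUP t\<in>{0..T}. l2sq h (f t));
            intDf = (LINT t:{0..T}|lborel. l2sq h (Dp h (f t)))
        in
         (\<forall>t\<in>{0..T}. inL2 (\<lambda>k. C0 - g t k) \<and>
            l2sq h (\<lambda>k. C0 - g t k) \<le> k1 * (l2sq h (\<lambda>k. C0 - c0 k) + \<kappa> * supf)) \<and>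
         (\<forall>t\<in>{0..T}. \<forall>k\<ge>1. \<bar>g t k\<bar> \<le> C1) \<and>
         (\<forall>t\<in>{0..T}. inL2 (Dp h (g t)) \<and>
            l2sq h (Dp h (g t)) \<le> C2 * T * (l2sq h (Dp h c0) + \<kappa> * intDf)) \<and>
         (\<forall>t\<in>{0..T}. inL2 (Dp h (\<lambda>k. phi B (g t k))) \<and>
            l2sq h (Dp h (\<lambda>k. phi B (g t k))) \<le> \<bar>B\<bar> * C2 * T * (l2sq h (Dp h c0) + \<kappa> * intDf))))"
proof -
  obtain pmin pmax where pm: "0 < pmin" "pmin \<le> pmax"
    "\<forall>c\<in>{0..C0}. pmin \<le> phi B c \<and> phi B c \<le> pmax" using hphi by blast
  have absB: "\<bar>B\<bar> = 1" using hB by auto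
  define C where "C = \<bar>C0\<bar>"
  define K0 where "K0 = C * (1 + C) * lam * exp (lam * (\<eta> * T))"
  define L where "L = Lc C lam (\<eta> * T)"
  define kap where "kap = K0\<^sup>2 * T\<^sup>2 + T + 1"
  define C2 where "C2 = (2 * L\<^sup>2 + 1) / T"
  have kap0: "kap > 0" unfolding kap_def using hT by (simp add: add_nonneg_pos)
  have C20: "C2 > 0" unfolding C2_def using hT by (simp add: add_nonneg_pos)
  have C10: "C + 1 > 0" unfolding C_def by simp
  show ?thesis
  proof (rule exI[of _ 2], rule exI[of _ kap], rule exI[of _ "C + 1"], rule exI[of _ C2], intro conjI allI impI)
    show "(0::real) < 2" by simp
    show "0 < kap" by (rule kap0)
    show "0 < C + 1" by (rule C10)
    show "0 < C2" by (rule C20)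
    fix h \<beta> \<psi> s0 c0 f K
    assume H: "0 < h \<and> 1 / 4 < \<beta> \<and> \<beta> < 1 / 2 \<and> holder_on \<beta> {0..T} \<psi> \<and>
       (\<forall>t\<in>{0..T}. 0 \<le> \<psi> t \<and> \<psi> t \<le> \<eta>) \<and> \<psi> 0 = 0 \<and>
       (\<forall>k. 0 \<le> s0 k \<and> s0 k \<le> \<eta>) \<and> s0 0 = 0 \<and> inL2 s0 \<and> inL2 (Dp h s0) \<and>
       (\<forall>k. cm \<le> c0 k \<and> c0 k \<le> C0) \<and> inL2 (\<lambda>k. C0 - c0 k) \<and> inL2 (Dp h c0) \<and>
       condF h T \<eta> \<psi> K f"
    have h: "h > 0" using H by blast
    have c0b: "\<And>k. cm \<le> c0 k \<and> c0 k \<le> C0" using H by blast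
    have cL2: "inL2 (\<lambda>k. C0 - c0 k)" using H by blast
    have cDL2: "inL2 (Dp h c0)" using H by blast
    have cF: "condF h T \<eta> \<psi> K f" using H by blast
    have meas: "\<And>k. (\<lambda>t. f t k) \<in> borel_measurable (restrict_space borel {0..T})"
      using cF unfolding condF_def by blast
    have DfL2: "\<And>t. t \<in> {0..T} \<Longrightarrow> inL2 (Dp h (f t))" using cF unfolding condF_def by blast
    have fL2: "\<And>t. t \<in> {0..T} \<Longrightarrow> inL2 (f t)" using cF unfolding condF_def by blast
    have sint: "set_integrable lborel {0..T} (\<lambda>t. l2sq h (Dp h (f t)))" using cF unfolding condF_def by blast
    have Kb: "\<And>t. t \<in> {0..T} \<Longrightarrow> l2sq h (f t) + (LINT t:{0..T}|lborel. l2sq h (Dp h (f t))) \<le> K"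
      using cF unfolding condF_def by blast
    have fb: "\<And>t k. t \<in> {0..T} \<Longrightarrow> 0 \<le> f t k \<and> f t k \<le> \<eta>" using cF unfolding condF_def by blast
    have C0pos: "0 < C0" using c0b[of 0] hcm by linarith
    have CC: "C = C0" unfolding C_def using C0pos by simp
    have C0': "0 \<le> C" using C0pos CC by simp
    have c0a: "\<And>k. 0 \<le> c0 k" using c0b hcm by (meson less_le_trans less_imp_le)
    have c0c: "\<And>k. c0 k \<le> C" using c0b CC by simp
    have c0P: "\<And>k. 0 \<le> 1 + B * c0 k"
    proof -
      fix k
      have "c0 k \<in> {0..C0}" using c0a c0b by auto
      hence "pmin \<le> phi B (c0 k)" using pm(3) by blast
      thus "0 \<le> 1 + B * c0 k" using pm(1) by (simp add: phi_def Acoef_def)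
    qed
    define F where "F \<tau> = l2sq h (Dp h (f \<tau>))" for \<tau>
    have iFT: "F integrable_on {0..T}" unfolding F_def by (rule set_borel_integral_eq_integral(1)[OF sint])
    have intDf: "(LINT t:{0..T}|lborel. l2sq h (Dp h (f t))) = integral {0..T} F"
      unfolding F_def by (rule set_borel_integral_eq_integral(2)[OF sint])
    have F0: "\<And>\<tau>. \<tau> \<in> {0..T} \<Longrightarrow> 0 \<le> F \<tau>" unfolding F_def using l2_nonneg[OF h DfL2] by blast
    have J0: "0 \<le> integral {0..T} F"
      by (rule Henstock_Kurzweil_Integration.integral_nonneg[OF iFT F0])
    have lfK: "\<And>t. t \<in> {0..T} \<Longrightarrow> l2sq h (f t) \<le> K" using Kb J0 intDf by fastforce
    have bdd: "bdd_above ((\<lambda>t. l2sq h (f t)) ` {0..T})" by (rule bdd_aboveI2[OF lfK])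
    define S where "S = (SUP t\<in>{0..T}. l2sq h (f t))"
    have lfS: "\<And>t. t \<in> {0..T} \<Longrightarrow> l2sq h (f t) \<le> S" unfolding S_def by (rule cSUP_upper[OF _ bdd])
    have S0: "0 \<le> S" using lfS[of 0] l2_nonneg[OF h fL2[of 0]] hT by simp
    have eta0: "0 \<le> \<eta>" using heta by simp
    have ints: "(\<lambda>\<tau>. f \<tau> k) integrable_on {0..t} \<and> (\<lambda>\<tau>. (f \<tau> k)\<^sup>2) integrable_on {0..t} \<and>
       (\<lambda>\<tau>. Dp h (f \<tau>) k) integrable_on {0..t} \<and> (\<lambda>\<tau>. (Dp h (f \<tau>) k)\<^sup>2) integrable_on {0..t}"
      if t: "t \<in> {0..T}" for t k
    proof -
      have t0: "0 \<le> t" "t \<le> T" using t by auto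
      have b1: "\<forall>\<tau>\<in>{0..T}. \<bar>f \<tau> k\<bar> \<le> \<eta>" using fb by fastforce
      have md: "(\<lambda>\<tau>. Dp h (f \<tau>) k) \<in> borel_measurable (restrict_space borel {0..T})"
        unfolding Dp_def using meas[of k] meas[of "Suc k"] by measurable
      have b2: "\<forall>\<tau>\<in>{0..T}. \<bar>Dp h (f \<tau>) k\<bar> \<le> \<eta> / h"
      proof
        fix \<tau> assume "\<tau> \<in> {0..T}"
        hence "\<bar>f \<tau> (Suc k) - f \<tau> k\<bar> \<le> \<eta>" using fb[of \<tau> k] fb[of \<tau> "Suc k"] by auto
        thus "\<bar>Dp h (f \<tau>) k\<bar> \<le> \<eta> / h" using h by (simp add: Dp_def abs_divide divide_right_mono)
      qed
      show ?thesis using integrable_bdd_sub[OF meas b1 t0] integrable_bdd_sub[OF md b2 t0] by blast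
    qed
    show "let g = gfun B lam c0 f;
            supf = (SUP t\<in>{0..T}. l2sq h (f t));
            intDf = (LINT t:{0..T}|lborel. l2sq h (Dp h (f t)))
        in
         (\<forall>t\<in>{0..T}. inL2 (\<lambda>k. C0 - g t k) \<and>
            l2sq h (\<lambda>k. C0 - g t k) \<le> 2 * (l2sq h (\<lambda>k. C0 - c0 k) + kap * supf)) \<and>
         (\<forall>t\<in>{0..T}. \<forall>k\<ge>1. \<bar>g t k\<bar> \<le> C + 1) \<and>
         (\<forall>t\<in>{0..T}. inL2 (Dp h (g t)) \<and>
            l2sq h (Dp h (g t)) \<le> C2 * T * (l2sq h (Dp h c0) + kap * intDf)) \<and>
         (\<forall>t\<in>{0..T}. inL2 (Dp h (\<lambda>k. phi B (g t k))) \<and>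
            l2sq h (Dp h (\<lambda>k. phi B (g t k))) \<le> \<bar>B\<bar> * C2 * T * (l2sq h (Dp h c0) + kap * intDf))"
      unfolding Let_def S_def[symmetric] intDf
    proof (intro conjI ballI allI impI)
      fix t assume t: "t \<in> {0..T}"
      have t0: "0 \<le> t" "t \<le> T" using t by auto
      have fbt: "\<And>\<tau> k. \<tau> \<in> {0..t} \<Longrightarrow> 0 \<le> f \<tau> k \<and> f \<tau> k \<le> \<eta>" using fb t by auto
      have if1: "\<And>k. (\<lambda>\<tau>. f \<tau> k) integrable_on {0..t}" using ints[OF t] by blast
      have if2: "\<And>k. (\<lambda>\<tau>. (f \<tau> k)\<^sup>2) integrable_on {0..t}" using ints[OF t] by blast
      have id1: "\<And>k. (\<lambda>\<tau>. Dp h (f \<tau>) k) integrable_on {0..t}" using ints[OF t] by blast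
      have id2: "\<And>k. (\<lambda>\<tau>. (Dp h (f \<tau>) k)\<^sup>2) integrable_on {0..t}" using ints[OF t] by blast
      have Sb: "\<And>\<tau> N. \<tau> \<in> {0..t} \<Longrightarrow> h * (\<Sum>n<N. (f \<tau> (Suc n))\<^sup>2) \<le> S"
      proof -
        fix \<tau> N assume "\<tau> \<in> {0..t}"
        hence tT: "\<tau> \<in> {0..T}" using t by auto
        show "h * (\<Sum>n<N. (f \<tau> (Suc n))\<^sup>2) \<le> S"
          using l2_partial_le[OF h fL2[OF tT], of N] lfS[OF tT] by linarith
      qed
      have cL2': "inL2 (\<lambda>k. C - c0 k)" using cL2 CC by simp
      note E1 = est1[OF h absB hlam t0 C0' eta0 c0a c0c c0P cL2' fbt if1 if2 Sb]
      show "inL2 (\<lambda>k. C0 - gfun B lam c0 f t k)" using E1(1) CC by simp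
      have "l2sq h (\<lambda>k. C0 - gfun B lam c0 f t k) \<le> 2 * l2sq h (\<lambda>k. C0 - c0 k) + 2 * K0\<^sup>2 * (t\<^sup>2 * S)"
        using E1(2) CC by (simp add: K0_def)
      also have "\<dots> \<le> 2 * (l2sq h (\<lambda>k. C0 - c0 k) + kap * S)"
      proof -
        have "t\<^sup>2 \<le> T\<^sup>2" using t0 by (intro power_mono) auto
        hence "K0\<^sup>2 * (t\<^sup>2 * S) \<le> K0\<^sup>2 * (T\<^sup>2 * S)" using S0 by (intro mult_left_mono mult_right_mono) auto
        also have "\<dots> \<le> kap * S"
        proof -
          have "K0\<^sup>2 * T\<^sup>2 \<le> K0\<^sup>2 * T\<^sup>2 + T + 1" using hT by simp
          from mult_right_mono[OF this S0] show ?thesis by (simp add: kap_def mult.assoc)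
        qed
        finally show ?thesis by (simp add: algebra_simps)
      qed
      finally show "l2sq h (\<lambda>k. C0 - gfun B lam c0 f t k) \<le> 2 * (l2sq h (\<lambda>k. C0 - c0 k) + kap * S)" .
    next
      fix t and k :: nat assume t: "t \<in> {0..T}" and "1 \<le> k"
      have t0: "0 \<le> t" "t \<le> T" using t by auto
      have if1: "(\<lambda>\<tau>. f \<tau> k) integrable_on {0..t}" using ints[OF t] by blast
      have I0: "0 \<le> integral {0..t} (\<lambda>\<tau>. f \<tau> k)"
        by (rule int_bounds(1)[OF if1 t0(1), of \<eta>]) (use fb t in auto)
      note GB = G_basic[OF c0a[of k] c0P[of k] I0 hlam]
      show "\<bar>gfun B lam c0 f t k\<bar> \<le> C + 1" unfolding gfun_eq using GB(2,3) c0c[of k] by simp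
    next
      fix t assume t: "t \<in> {0..T}"
      have t0: "0 \<le> t" "t \<le> T" using t by auto
      have fbt: "\<And>\<tau> k. \<tau> \<in> {0..t} \<Longrightarrow> 0 \<le> f \<tau> k \<and> f \<tau> k \<le> \<eta>" using fb t by auto
      have if1: "\<And>k. (\<lambda>\<tau>. f \<tau> k) integrable_on {0..t}" using ints[OF t] by blast
      have id1: "\<And>k. (\<lambda>\<tau>. Dp h (f \<tau>) k) integrable_on {0..t}" using ints[OF t] by blast
      have id2: "\<And>k. (\<lambda>\<tau>. (Dp h (f \<tau>) k)\<^sup>2) integrable_on {0..t}" using ints[OF t] by blast
      have Fb: "\<And>\<tau> N. \<tau> \<in> {0..t} \<Longrightarrow> h * (\<Sum>n<N. (Dp h (f \<tau>) (Suc n))\<^sup>2) \<le> F \<tau>"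
      proof -
        fix \<tau> N assume "\<tau> \<in> {0..t}"
        hence tT: "\<tau> \<in> {0..T}" using t by auto
        show "h * (\<Sum>n<N. (Dp h (f \<tau>) (Suc n))\<^sup>2) \<le> F \<tau>"
          unfolding F_def using l2_partial_le[OF h DfL2[OF tT], of N] by simp
      qed
      have iF: "F integrable_on {0..t}" by (rule integrable_on_subinterval[OF iFT]) (use t0 in auto)
      have FJ: "integral {0..t} F \<le> integral {0..T} F"
        by (rule integral_subset_le[OF _ iF iFT]) (use t0 F0 in auto)
      note E3 = est3[OF h absB hlam t0 C0' eta0 c0a c0c c0P cDL2 fbt if1 id1 id2 Fb iF FJ J0]
      have main: "l2sq h (Dp h (gfun B lam c0 f t)) \<le> C2 * T * (l2sq h (Dp h c0) + kap * integral {0..T} F)"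
      proof -
        have a0: "0 \<le> l2sq h (Dp h c0)" by (rule l2_nonneg[OF h cDL2])
        have "l2sq h (Dp h (gfun B lam c0 f t)) \<le> 2 * L\<^sup>2 * (l2sq h (Dp h c0) + T * integral {0..T} F)"
          using E3(2) by (simp add: L_def)
        also have "\<dots> \<le> (2 * L\<^sup>2 + 1) * (l2sq h (Dp h c0) + kap * integral {0..T} F)"
        proof (rule mult_mono)
          have "T * integral {0..T} F \<le> kap * integral {0..T} F"
          proof (rule mult_right_mono[OF _ J0])
            show "T \<le> kap" unfolding kap_def by simp
          qed
          thus "l2sq h (Dp h c0) + T * integral {0..T} F \<le> l2sq h (Dp h c0) + kap * integral {0..T} F" by simp
          show "0 \<le> l2sq h (Dp h c0) + T * integral {0..T} F" using a0 J0 hT by simp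
        qed simp_all
        also have "2 * L\<^sup>2 + 1 = C2 * T" unfolding C2_def using hT by simp
        finally show ?thesis .
      qed
      show "inL2 (Dp h (gfun B lam c0 f t))" by (rule E3(1))
      show "l2sq h (Dp h (gfun B lam c0 f t)) \<le> C2 * T * (l2sq h (Dp h c0) + kap * integral {0..T} F)"
        by (rule main)
      have sqeq: "(\<lambda>n. (Dp h (\<lambda>k. phi B (gfun B lam c0 f t k)) (Suc n))\<^sup>2) = (\<lambda>n. (Dp h (gfun B lam c0 f t) (Suc n))\<^sup>2)"
      proof
        fix n
        have "Dp h (\<lambda>k. phi B (gfun B lam c0 f t k)) (Suc n) = B * Dp h (gfun B lam c0 f t) (Suc n)"
          by (simp add: Dp_def phi_def algebra_simps add_divide_distrib diff_divide_distrib)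
        moreover have "B\<^sup>2 = 1" using absB by (metis abs_1 power2_abs power_one)
        ultimately show "(Dp h (\<lambda>k. phi B (gfun B lam c0 f t k)) (Suc n))\<^sup>2 = (Dp h (gfun B lam c0 f t) (Suc n))\<^sup>2"
          by (simp add: power_mult_distrib)
      qed
      show "inL2 (Dp h (\<lambda>k. phi B (gfun B lam c0 f t k)))"
        using E3(1) unfolding inL2_def sqeq .
      show "l2sq h (Dp h (\<lambda>k. phi B (gfun B lam c0 f t k))) \<le> \<bar>B\<bar> * C2 * T * (l2sq h (Dp h c0) + kap * integral {0..T} F)"
        using main unfolding l2sq_def sqeq absB by simp
    qed
  qed
qed

end
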